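(* Let $a\in\mathbb{Z}$ and $b\in\mathbb{Z}_{>0}$. Expand $q^{-\frac12a}X_4E_{(a,b)}-E_{(a,b-1)}$ as a $\mathbb{Z}[q^{\pm\frac12}]$-linear combination of standard monomials. Then every standard monomial $E_{(c,d)}$ occurring with nonzero coefficient satisfies $c=a-1$ and $d\ge b-1\ge0$.
   Context: Let $\mathcal{T}$ be the quantum torus over $\mathbb{Z}[q^{\pm\frac12}]$ generated by $X_1^{\pm1},X_2^{\pm1}$ with $X_1X_2=qX_2X_1$, with skew field of fractions $\mathcal{F}$. Define $X_k\in\mathcal{F}$ ($k\in\mathbb{Z}$) by $X_{k-1}X_{k+1}=q^{\frac12}X_k+1$ for $k$ odd and $X_{k-1}X_{k+1}=q^2X_k^4+1$ for $k$ even; $\mathcal{A}_q(1,4)$ is the $\mathbb{Z}[q^{\pm\frac12}]$-subalgebra of $\mathcal{F}$ generated by all $X_k$. For $x\in\mathbb{Z}$, $[x]_+=\max(x,0)$. Standard monomials: $E_{(a,b)}=q^{-\frac12ab}X_3^{[-a]_+}X_1^{[a]_+}X_2^{[b]_+}X_0^{[-b]_+}$ for $(a,b)\in\mathbb{Z}^2$; they form a $\mathbb{Z}[q^{\pm\frac12}]$-basis of $\mathcal{A}_q(1,4)$. *)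

theory Defs
  imports "HOL-Library.Poly_Mapping"
begin

text \<open>Coefficient ring Z[q^(+-1/2)]: Laurent polynomials in t = q^(1/2),
  represented as finitely supported maps  exponent of t  to  integer coefficient,
  with convolution product (a commutative ring).\<close>
type_synonym lring = "int \<Rightarrow>\<^sub>0 int"

definition tp :: "int \<Rightarrow> lring" where
  "tp k = Poly_Mapping.single k 1"

text \<open>Quantum torus T: finitely supported maps (m,n) to coefficient in lring;
  the key (m,n) stands for the ordered monomial X1^m X2^n.
  From X1 X2 = q X2 X1 we get X2^n X1^m' = q^(-n m') X1^m' X2^n.\<close>
type_synonym qtorus = "(int \<times> int) \<Rightarrow>\<^sub>0 lring"

definition qmul :: "qtorus \<Rightarrow> qtorus \<Rightarrow> qtorus" where
  "qmul p r = (\<Sum>(m,n)\<in>Poly_Mapping.keys p. \<Sum>(m',n')\<in>Poly_Mapping.keys r.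
      Poly_Mapping.single (m + m', n + n')
        (tp (-2 * n * m') * Poly_Mapping.lookup p (m,n) * Poly_Mapping.lookup r (m',n')))"

definition scal :: "lring \<Rightarrow> qtorus" where
  "scal c = Poly_Mapping.single (0,0) c"

definition qone :: qtorus where "qone = scal 1"

fun qpow :: "qtorus \<Rightarrow> nat \<Rightarrow> qtorus" where
  "qpow x 0 = qone"
| "qpow x (Suc n) = qmul x (qpow x n)"

definition mono :: "int \<Rightarrow> int \<Rightarrow> qtorus" where
  "mono m n = Poly_Mapping.single (m,n) 1"

text \<open>Cluster variables X0..X4; these are the unique solutions in the skew field
  of the exchange relations X_(k-1) X_(k+1) = q^(1/2) X_k + 1 (k odd),
  = q^2 X_k^4 + 1 (k even), and they lie in the quantum torus.\<close>
definition QX1 :: qtorus where "QX1 = mono 1 0"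
definition QX2 :: qtorus where "QX2 = mono 0 1"
definition QX0 :: qtorus where
  "QX0 = qmul (qmul (scal (tp 1)) QX1 + qone) (mono 0 (-1))"   (* from X0 X2 = q^(1/2) X1 + 1 *)
definition QX3 :: qtorus where
  "QX3 = qmul (mono (-1) 0) (qmul (scal (tp 4)) (qpow QX2 4) + qone)"  (* from X1 X3 = q^2 X2^4 + 1 *)
definition QX4 :: qtorus where
  "QX4 = qmul (mono 0 (-1)) (qmul (scal (tp 1)) QX3 + qone)"   (* from X2 X4 = q^(1/2) X3 + 1 *)

definition posp :: "int \<Rightarrow> nat" where "posp x = nat (max x 0)"

definition E :: "int \<Rightarrow> int \<Rightarrow> qtorus" where
  "E a b = qmul (scal (tp (- a * b)))
     (qmul (qpow QX3 (posp (-a))) (qmul (qpow QX1 (posp a))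
        (qmul (qpow QX2 (posp b)) (qpow QX0 (posp (-b))))))"

definition lincomb :: "(int \<times> int \<Rightarrow> lring) \<Rightarrow> qtorus" where
  "lincomb f = (\<Sum>cd\<in>{cd. f cd \<noteq> 0}. qmul (scal (f cd)) (E (fst cd) (snd cd)))"

end

theory Submission
  imports Defs
begin

definition tw :: "int \<times> int \<Rightarrow> int \<times> int \<Rightarrow> int" where
  "tw k k' = -2 * snd k * fst k'"

definition pl :: "int \<times> int \<Rightarrow> int \<times> int \<Rightarrow> int \<times> int" where
  "pl k k' = (fst k + fst k', snd k + snd k')"

lemma tp_mult: "tp x * tp y = tp (x + y)"
  by (simp add: tp_def mult_single)

lemma tp_0: "tp 0 = 1"
  by (simp add: tp_def)

lemma tp_nz: "tp x \<noteq> 0"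
  by (simp add: tp_def)

lemma qmul_alt: "qmul p r = (\<Sum>k\<in>Poly_Mapping.keys p. \<Sum>k'\<in>Poly_Mapping.keys r.
   Poly_Mapping.single (pl k k') (tp (tw k k') * Poly_Mapping.lookup p k * Poly_Mapping.lookup r k'))"
  by (simp add: qmul_def split_def pl_def tw_def)

lemma qmul_gen:
  assumes "finite A" "Poly_Mapping.keys p \<subseteq> A" "finite B" "Poly_Mapping.keys r \<subseteq> B"
  shows "qmul p r = (\<Sum>k\<in>A. \<Sum>k'\<in>B.
   Poly_Mapping.single (pl k k') (tp (tw k k') * Poly_Mapping.lookup p k * Poly_Mapping.lookup r k'))"
proof -
  have "qmul p r = (\<Sum>k\<in>A. \<Sum>k'\<in>Poly_Mapping.keys r.
   Poly_Mapping.single (pl k k') (tp (tw k k') * Poly_Mapping.lookup p k * Poly_Mapping.lookup r k'))"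
    unfolding qmul_alt
    by (rule sum.mono_neutral_left) (use assms in \<open>auto simp: in_keys_iff\<close>)
  also have "\<dots> = (\<Sum>k\<in>A. \<Sum>k'\<in>B.
   Poly_Mapping.single (pl k k') (tp (tw k k') * Poly_Mapping.lookup p k * Poly_Mapping.lookup r k'))"
    by (rule sum.cong[OF refl], rule sum.mono_neutral_left) (use assms in \<open>auto simp: in_keys_iff\<close>)
  finally show ?thesis .
qed

lemma qmul_single: "qmul (Poly_Mapping.single k c) (Poly_Mapping.single k' c')
   = Poly_Mapping.single (pl k k') (tp (tw k k') * c * c')"
  by (subst qmul_gen[where A="{k}" and B="{k'}"]) auto

lemma qmul_add_left: "qmul (p + p') r = qmul p r + qmul p' r"
proof -
  let ?A = "Poly_Mapping.keys p \<union> Poly_Mapping.keys p'"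
  have k: "Poly_Mapping.keys (p + p') \<subseteq> ?A" by (rule keys_add)
  show ?thesis
    apply (subst qmul_gen[where A="?A" and B="Poly_Mapping.keys r"], use k in auto)
    apply (subst qmul_gen[where p=p and A="?A" and B="Poly_Mapping.keys r"], auto)
    apply (subst qmul_gen[where p=p' and A="?A" and B="Poly_Mapping.keys r"], auto)
    apply (simp add: lookup_add algebra_simps single_add sum.distrib)
    done
qed

lemma qmul_add_right: "qmul r (p + p') = qmul r p + qmul r p'"
proof -
  let ?A = "Poly_Mapping.keys p \<union> Poly_Mapping.keys p'"
  have k: "Poly_Mapping.keys (p + p') \<subseteq> ?A" by (rule keys_add)
  show ?thesis
    apply (subst qmul_gen[where B="?A" and A="Poly_Mapping.keys r"], use k in auto)
    apply (subst qmul_gen[where r=p and B="?A" and A="Poly_Mapping.keys r"], auto)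
    apply (subst qmul_gen[where r=p' and B="?A" and A="Poly_Mapping.keys r"], auto)
    apply (simp add: lookup_add algebra_simps single_add sum.distrib)
    done
qed

lemma qmul_zero_left [simp]: "qmul 0 r = 0" by (simp add: qmul_def)
lemma qmul_zero_right [simp]: "qmul r 0 = 0" by (simp add: qmul_def)

lemma qmul_sum_left: "finite I \<Longrightarrow> qmul (\<Sum>i\<in>I. f i) r = (\<Sum>i\<in>I. qmul (f i) r)"
  by (induction I rule: finite_induct) (auto simp: qmul_add_left)

lemma qmul_sum_right: "finite I \<Longrightarrow> qmul r (\<Sum>i\<in>I. f i) = (\<Sum>i\<in>I. qmul r (f i))"
  by (induction I rule: finite_induct) (auto simp: qmul_add_right)

lemma monomials: "p = (\<Sum>k\<in>Poly_Mapping.keys p. Poly_Mapping.single k (Poly_Mapping.lookup p k))"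
  by (rule poly_mapping_eqI) (auto simp: lookup_sum lookup_single when_def in_keys_iff)

lemma qmul_assoc_single: "qmul (qmul (Poly_Mapping.single k a) (Poly_Mapping.single k' b)) (Poly_Mapping.single k'' c)
  = qmul (Poly_Mapping.single k a) (qmul (Poly_Mapping.single k' b) (Poly_Mapping.single k'' c))"
  by (simp add: qmul_single tp_mult pl_def tw_def algebra_simps)

lemma qmul_assoc: "qmul (qmul p r) s = qmul p (qmul r s)"
proof -
  have "qmul (qmul p r) s = qmul (qmul (\<Sum>k\<in>Poly_Mapping.keys p. Poly_Mapping.single k (Poly_Mapping.lookup p k))
     (\<Sum>k\<in>Poly_Mapping.keys r. Poly_Mapping.single k (Poly_Mapping.lookup r k))) (\<Sum>k\<in>Poly_Mapping.keys s. Poly_Mapping.single k (Poly_Mapping.lookup s k))"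
    by (simp only: monomials[symmetric])
  also have "\<dots> = qmul (\<Sum>k\<in>Poly_Mapping.keys p. Poly_Mapping.single k (Poly_Mapping.lookup p k))
     (qmul (\<Sum>k\<in>Poly_Mapping.keys r. Poly_Mapping.single k (Poly_Mapping.lookup r k)) (\<Sum>k\<in>Poly_Mapping.keys s. Poly_Mapping.single k (Poly_Mapping.lookup s k)))"
    by (simp add: qmul_sum_left qmul_sum_right qmul_assoc_single)
  also have "\<dots> = qmul p (qmul r s)"
    by (simp only: monomials[symmetric])
  finally show ?thesis .
qed


abbreviation sng :: "int \<times> int \<Rightarrow> lring \<Rightarrow> qtorus" where
  "sng \<equiv> Poly_Mapping.single"

lemma scal_sng: "scal c = sng (0,0) c" by (simp add: scal_def)
lemma qone_sng: "qone = sng (0,0) 1" by (simp add: qone_def scal_def)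

lemma scal_single_l: "qmul (scal c) (sng k d) = sng k (c * d)"
  by (simp add: scal_def qmul_single pl_def tw_def tp_0)
lemma scal_single_r: "qmul (sng k d) (scal c) = sng k (c * d)"
  by (simp add: scal_def qmul_single pl_def tw_def tp_0 mult.commute)

lemma qmul_diff_right: "qmul r (p - q) = qmul r p - qmul r q"
  by (metis add_diff_cancel diff_add_cancel qmul_add_right)
lemma qmul_diff_left: "qmul (p - q) r = qmul p r - qmul q r"
  by (metis add_diff_cancel diff_add_cancel qmul_add_left)

lemma scal_comm: "qmul (scal c) p = qmul p (scal c)"
proof -
  have "qmul (scal c) (\<Sum>k\<in>Poly_Mapping.keys p. sng k (Poly_Mapping.lookup p k))
      = qmul (\<Sum>k\<in>Poly_Mapping.keys p. sng k (Poly_Mapping.lookup p k)) (scal c)"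
    by (simp add: qmul_sum_left qmul_sum_right scal_single_l scal_single_r)
  then show ?thesis by (simp only: monomials[symmetric])
qed

lemma lookup_scal: "Poly_Mapping.lookup (qmul (scal c) p) x = c * Poly_Mapping.lookup p x"
proof -
  have "qmul (scal c) (\<Sum>k\<in>Poly_Mapping.keys p. sng k (Poly_Mapping.lookup p k))
      = (\<Sum>k\<in>Poly_Mapping.keys p. sng k (c * Poly_Mapping.lookup p k))"
    by (simp add: qmul_sum_right scal_single_l)
  then have "qmul (scal c) p = (\<Sum>k\<in>Poly_Mapping.keys p. sng k (c * Poly_Mapping.lookup p k))"
    by (simp only: monomials[symmetric])
  then show ?thesis
    by (auto simp: lookup_sum lookup_single when_def in_keys_iff)
qed

lemma scal_one: "qmul qone p = p"
  by (rule poly_mapping_eqI) (simp add: qone_def lookup_scal)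
lemma scal_one_r: "qmul p qone = p"
  using scal_comm[of 1 p] scal_one by (simp add: qone_def)

lemma scal_mid: "qmul (scal c) (qmul p q) = qmul p (qmul (scal c) q)"
  by (metis qmul_assoc scal_comm)

lemma scal_scal: "qmul (scal c) (qmul (scal d) p) = qmul (scal (c * d)) p"
  by (simp add: qmul_assoc[symmetric] scal_def qmul_single pl_def tw_def tp_0)

lemma QX2_pow: "qpow QX2 n = sng (0, int n) 1"
  by (induction n) (auto simp: QX2_def mono_def qone_sng qmul_single pl_def tw_def tp_0)

lemma QX1_pow: "qpow QX1 n = sng (int n, 0) 1"
  by (induction n) (auto simp: QX1_def mono_def qone_sng qmul_single pl_def tw_def tp_0)

lemma QX3_eq: "QX3 = sng (-1,4) (tp 4) + sng (-1,0) 1"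
proof -
  have "qpow QX2 4 = sng (0,4) 1" by (simp add: QX2_pow)
  then show ?thesis
    by (simp add: QX3_def mono_def scal_single_l qone_sng qmul_add_right qmul_single pl_def tw_def tp_0)
qed

lemma QX0_eq: "QX0 = sng (1,-1) (tp 1) + sng (0,-1) 1"
  by (simp add: QX0_def QX1_def mono_def scal_single_l qone_sng qmul_add_left qmul_single pl_def tw_def tp_0)

lemma QX4_eq: "QX4 = sng (-1,3) (tp 3) + sng (-1,-1) (tp (-1)) + sng (0,-1) 1"
  by (simp add: QX4_def QX3_eq mono_def scal_single_l qone_sng qmul_add_right qmul_single pl_def tw_def tp_0 tp_mult)


lemma lookup_qmul: "Poly_Mapping.lookup (qmul p r) x = (\<Sum>k\<in>Poly_Mapping.keys p. \<Sum>k'\<in>Poly_Mapping.keys r.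
   (tp (tw k k') * Poly_Mapping.lookup p k * Poly_Mapping.lookup r k' when pl k k' = x))"
  by (simp add: qmul_alt lookup_sum lookup_single)

lemma keys_qmul: "x \<in> Poly_Mapping.keys (qmul p r) \<Longrightarrow>
   \<exists>k\<in>Poly_Mapping.keys p. \<exists>k'\<in>Poly_Mapping.keys r. x = pl k k'"
proof (rule ccontr)
  assume x: "x \<in> Poly_Mapping.keys (qmul p r)" and n: "\<not> (\<exists>k\<in>Poly_Mapping.keys p. \<exists>k'\<in>Poly_Mapping.keys r. x = pl k k')"
  have "Poly_Mapping.lookup (qmul p r) x = 0"
    unfolding lookup_qmul by (intro sum.neutral ballI) (use n in \<open>force simp: when_def\<close>)
  with x show False by (simp add: in_keys_iff)
qed

definition hom :: "qtorus \<Rightarrow> int \<Rightarrow> bool" where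
  "hom p m = (\<forall>k\<in>Poly_Mapping.keys p. fst k = m)"

lemma hom_qmul: "hom p m \<Longrightarrow> hom r m' \<Longrightarrow> hom (qmul p r) (m + m')"
  unfolding hom_def by (force dest!: keys_qmul simp: pl_def)

lemma hom_QX3: "hom QX3 (-1)"
  unfolding hom_def QX3_eq using keys_add[of "sng (-1,4) (tp 4)" "sng (-1,0) 1"] by (fastforce simp: tp_nz)

lemma hom_pow: "hom (qpow QX3 n) (- int n)"
proof (induction n)
  case 0 then show ?case by (simp add: hom_def qone_sng)
next
  case (Suc n)
  from hom_qmul[OF hom_QX3 Suc] show ?case by simp
qed

lemma hom_comm:
  assumes "hom p m0"
  shows "qmul (sng (0,j) c) p = qmul p (sng (0,j) (tp (-2*j*m0) * c))"
proof -
  have "qmul (sng (0,j) c) (\<Sum>k\<in>Poly_Mapping.keys p. sng k (Poly_Mapping.lookup p k))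
      = qmul (\<Sum>k\<in>Poly_Mapping.keys p. sng k (Poly_Mapping.lookup p k)) (sng (0,j) (tp (-2*j*m0) * c))"
    using assms
    by (auto simp: qmul_sum_left qmul_sum_right qmul_single pl_def tw_def hom_def tp_0 algebra_simps
        intro!: sum.cong)
  then show ?thesis by (simp only: monomials[symmetric])
qed


lemma E_nonpos:
  assumes "a \<le> 0" "b \<ge> 0"
  shows "E a b = qmul (qpow QX3 (nat (-a))) (sng (0,b) (tp (-a*b)))"
proof -
  have "posp a = 0" "posp (-b) = 0" "posp (-a) = nat (-a)" "int (posp b) = b"
    using assms by (auto simp: posp_def)
  then show ?thesis
    by (simp add: E_def QX2_pow scal_one scal_one_r scal_mid scal_single_l)
qed

lemma E_pos:
  assumes "a \<ge> 0" "b \<ge> 0"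
  shows "E a b = sng (a,b) (tp (-a*b))"
proof -
  have "posp (-a) = 0" "posp (-b) = 0" "int (posp a) = a" "int (posp b) = b"
    using assms by (auto simp: posp_def)
  then show ?thesis
    by (simp add: E_def QX2_pow QX1_pow scal_one scal_one_r scal_single_l qmul_single pl_def tw_def tp_0)
qed

lemma sng_tp_eq: "k = k' \<Longrightarrow> x = y \<Longrightarrow> sng k (tp x) = sng k' (tp y)" by simp

lemma exist_neg:
  assumes a: "a \<le> 0" and b: "b > 0"
  shows "qmul (qmul (scal (tp (-a))) QX4) (E a b) - E a (b - 1)
       = qmul (scal (tp (-b))) (E (a-1) (b-1))"
proof -
  define n where "n = nat (-a)"
  have an: "a = - int n" using a by (simp add: n_def)
  define X where "X = qpow QX3 n"
  define Y where "Y = qmul QX3 X"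
  have hX: "hom X (- int n)" by (simp add: X_def hom_pow)
  have hY: "hom Y (-1 + - int n)" unfolding Y_def by (rule hom_qmul[OF hom_QX3 hX])
  have E1: "E a b = qmul X (sng (0,b) (tp (-a*b)))"
    using E_nonpos[of a b] a b by (simp add: X_def n_def)
  have E2: "E a (b-1) = qmul X (sng (0,b-1) (tp (-a*(b-1))))"
    using E_nonpos[of a "b-1"] a b by (simp add: X_def n_def)
  have E3: "E (a-1) (b-1) = qmul Y (sng (0,b-1) (tp (-(a-1)*(b-1))))"
  proof -
    have "nat (-(a-1)) = Suc n" using a by (simp add: n_def)
    then show ?thesis using E_nonpos[of "a-1" "b-1"] a b by (simp add: X_def Y_def)
  qed
  have Q4: "QX4 = qmul (sng (0,-1) 1) (qmul (scal (tp 1)) QX3 + qone)"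
    by (simp add: QX4_def mono_def)
  have c1: "qmul (sng (0,-1) 1) (qmul (scal (tp 1)) Y) = qmul Y (sng (0,-1) (tp (-2*(-1)*(-1 + - int n)) * tp 1))"
    by (simp add: qmul_assoc[symmetric] scal_single_r hom_comm[OF hY])
  have c2: "qmul (sng (0,-1) 1) X = qmul X (sng (0,-1) (tp (-2*(-1)*(- int n)) * 1))"
    by (rule hom_comm[OF hX])
  have QX: "qmul QX4 X = qmul Y (sng (0,-1) (tp (-2*(-1)*(-1 + - int n)) * tp 1))
       + qmul X (sng (0,-1) (tp (-2*(-1)*(- int n)) * 1))"
    unfolding Q4 qmul_assoc qmul_add_left qmul_add_right c1[symmetric] c2[symmetric]
    by (simp add: qmul_assoc scal_one Y_def)
  have sm: "\<And>Z c d k. qmul (scal c) (qmul Z (sng k d)) = qmul Z (sng k (c * d))"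
    by (simp add: scal_mid scal_single_l)
  have ss: "\<And>c d. qmul (sng (0,-1) c) (sng (0,b) d) = sng (0,b-1) (c * d)"
    by (simp add: qmul_single pl_def tw_def tp_0)
  have L: "qmul (qmul (scal (tp (-a))) QX4) (E a b)
     = qmul Y (sng (0,b-1) (tp (-a) * (tp (-2*(-1)*(-1 + - int n)) * tp 1 * tp (-a*b))))
       + qmul X (sng (0,b-1) (tp (-a) * (tp (-2*(-1)*(- int n)) * 1 * tp (-a*b))))"
    unfolding E1 qmul_assoc
    by (simp add: qmul_assoc[symmetric] QX qmul_add_left) (simp add: qmul_assoc ss qmul_add_right sm)
  have e1: "tp (-a) * (tp (-2*(-1)*(-1 + - int n)) * tp 1 * tp (-a*b)) = tp (-b) * tp (-(a-1)*(b-1))"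
    unfolding tp_mult by (rule arg_cong[where f=tp]) (simp add: an algebra_simps)
  have e2: "tp (-a) * (tp (-2*(-1)*(- int n)) * 1 * tp (-a*b)) = tp (-a*(b-1))"
    unfolding tp_mult mult_1_right by (rule arg_cong[where f=tp]) (simp add: an algebra_simps)
  show ?thesis
    unfolding L E2 E3 e1 e2 by (simp add: sm)
qed


lemma exist_pos:
  assumes a: "a \<ge> 1" and b: "b > 0"
  shows "qmul (qmul (scal (tp (-a))) QX4) (E a b) - E a (b - 1)
       = qmul (scal (tp (-b))) (E (a-1) (b-1)) + qmul (scal (tp (-4*a-b))) (E (a-1) (b+3))"
proof -
  have p1: "qmul (sng (-1,3) (tp 3)) (sng (a,b) (tp (-a*b))) = sng (a-1,b+3) (tp (3-6*a-a*b))"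
    unfolding qmul_single tp_mult by (rule sng_tp_eq) (simp_all add: pl_def tw_def algebra_simps)
  have p2: "qmul (sng (-1,-1) (tp (-1))) (sng (a,b) (tp (-a*b))) = sng (a-1,b-1) (tp (2*a-1-a*b))"
    unfolding qmul_single tp_mult by (rule sng_tp_eq) (simp_all add: pl_def tw_def algebra_simps)
  have p3: "qmul (sng (0,-1) 1) (sng (a,b) (tp (-a*b))) = sng (a,b-1) (tp (2*a-a*b))"
    unfolding qmul_single tp_mult mult_1_right by (rule sng_tp_eq) (simp_all add: pl_def tw_def algebra_simps)
  have L: "qmul (qmul (scal (tp (-a))) QX4) (E a b) =
     sng (a-1,b+3) (tp (-a) * tp (3-6*a-a*b)) + sng (a-1,b-1) (tp (-a) * tp (2*a-1-a*b))
      + sng (a,b-1) (tp (-a) * tp (2*a-a*b))"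
  proof -
    have M: "qmul QX4 (E a b) = sng (a-1,b+3) (tp (3-6*a-a*b)) + sng (a-1,b-1) (tp (2*a-1-a*b))
      + sng (a,b-1) (tp (2*a-a*b))"
    proof -
      have Eab: "E a b = sng (a,b) (tp (-a*b))" using a b by (simp add: E_pos)
      show ?thesis unfolding Eab QX4_eq qmul_add_left p1 p2 p3 by (rule refl)
    qed
    show ?thesis unfolding qmul_assoc M by (simp add: qmul_add_right scal_single_l)
  qed
  have E2: "E a (b-1) = sng (a,b-1) (tp (-a*(b-1)))" using a b by (simp add: E_pos)
  have E3: "E (a-1) (b-1) = sng (a-1,b-1) (tp (-(a-1)*(b-1)))" using a b by (simp add: E_pos)
  have E4: "E (a-1) (b+3) = sng (a-1,b+3) (tp (-(a-1)*(b+3)))" using a b by (simp add: E_pos)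
  have e1: "tp (-a) * tp (3-6*a-a*b) = tp (-4*a-b) * tp (-(a-1)*(b+3))"
    unfolding tp_mult by (rule arg_cong[where f=tp]) (simp add: algebra_simps)
  have e2: "tp (-a) * tp (2*a-1-a*b) = tp (-b) * tp (-(a-1)*(b-1))"
    unfolding tp_mult by (rule arg_cong[where f=tp]) (simp add: algebra_simps)
  have e3: "tp (-a) * tp (2*a-a*b) = tp (-a*(b-1))"
    unfolding tp_mult by (rule arg_cong[where f=tp]) (simp add: algebra_simps)
  show ?thesis
    unfolding L E2 E3 E4 e1 e2 e3 by (simp add: scal_single_l)
qed


definition pt :: "qtorus \<Rightarrow> int \<Rightarrow> int \<Rightarrow> bool" where
  "pt p x y = ((\<forall>k\<in>Poly_Mapping.keys p. x \<le> fst k \<and> y \<le> snd k) \<and> (\<exists>u. Poly_Mapping.lookup p (x,y) = tp u))"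

lemma pt_qmul:
  assumes P: "pt p x y" and R: "pt r x' y'"
  shows "pt (qmul p r) (x+x') (y+y')"
proof -
  from P obtain u where u: "Poly_Mapping.lookup p (x,y) = tp u" and kp: "\<forall>k\<in>Poly_Mapping.keys p. x \<le> fst k \<and> y \<le> snd k"
    by (auto simp: pt_def)
  from R obtain v where v: "Poly_Mapping.lookup r (x',y') = tp v" and kr: "\<forall>k\<in>Poly_Mapping.keys r. x' \<le> fst k \<and> y' \<le> snd k"
    by (auto simp: pt_def)
  have inp: "(x,y) \<in> Poly_Mapping.keys p" using u by (simp add: in_keys_iff tp_nz)
  have inr: "(x',y') \<in> Poly_Mapping.keys r" using v by (simp add: in_keys_iff tp_nz)
  have keys: "\<forall>k\<in>Poly_Mapping.keys (qmul p r). x+x' \<le> fst k \<and> y+y' \<le> snd k"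
    using kp kr by (force dest!: keys_qmul simp: pl_def)
  define c where "c = tp (tw (x,y) (x',y')) * tp u * tp v"
  have "Poly_Mapping.lookup (qmul p r) (x+x',y+y') =
     (\<Sum>k\<in>Poly_Mapping.keys p. \<Sum>k'\<in>Poly_Mapping.keys r. (if k = (x,y) then (if k' = (x',y') then c else 0) else 0))"
    unfolding lookup_qmul
  proof (intro sum.cong refl)
    fix k k' assume k: "k \<in> Poly_Mapping.keys p" and k': "k' \<in> Poly_Mapping.keys r"
    have "pl k k' = (x+x',y+y') \<longleftrightarrow> k = (x,y) \<and> k' = (x',y')"
      using kp[rule_format, OF k] kr[rule_format, OF k'] by (cases k, cases k') (auto simp: pl_def)
    then show "(tp (tw k k') * Poly_Mapping.lookup p k * Poly_Mapping.lookup r k' when pl k k' = (x + x', y + y'))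
        = (if k = (x,y) then (if k' = (x',y') then c else 0) else 0)"
      by (auto simp: when_def c_def u v)
  qed
  also have "\<dots> = (\<Sum>k\<in>Poly_Mapping.keys p. if k = (x,y) then (\<Sum>k'\<in>Poly_Mapping.keys r. if k' = (x',y') then c else 0) else 0)"
    by (rule sum.cong) auto
  also have "\<dots> = c" using inp inr by (simp add: sum.delta)
  finally show ?thesis using keys by (auto simp: pt_def c_def tp_mult)
qed

lemma pt_cong: "pt p x y \<Longrightarrow> x = x' \<Longrightarrow> y = y' \<Longrightarrow> pt p x' y'" by simp

lemma pt_qone: "pt qone 0 0"
  by (auto simp: pt_def qone_sng tp_0[symmetric])

lemma pt_scal: "pt (scal (tp k)) 0 0"
  by (auto simp: pt_def scal_sng tp_nz)

lemma pt_pow: "pt p x y \<Longrightarrow> pt (qpow p n) (int n * x) (int n * y)"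
proof (induction n)
  case 0 then show ?case using pt_qone by simp
next
  case (Suc n)
  from pt_qmul[OF Suc.prems Suc.IH[OF Suc.prems]]
  have "pt (qpow p (Suc n)) (x + int n * x) (y + int n * y)" by simp
  then show ?case
    by (rule pt_cong) (simp_all add: algebra_simps)
qed

lemma pt_QX1: "pt QX1 1 0"
  by (auto simp: pt_def QX1_def mono_def tp_0[symmetric])
lemma pt_QX2: "pt QX2 0 1"
  by (auto simp: pt_def QX2_def mono_def tp_0[symmetric])

lemma pt_QX3: "pt QX3 (-1) 0"
proof -
  have k: "Poly_Mapping.keys QX3 \<subseteq> {(-1,4),(-1,0)}"
    unfolding QX3_eq using keys_add[of "sng (-1,4) (tp 4)" "sng (-1,0) 1"] by (auto simp: tp_nz)
  have l: "Poly_Mapping.lookup QX3 (-1,0) = tp 0"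
    by (simp add: QX3_eq lookup_add lookup_single tp_0)
  show ?thesis unfolding pt_def using k l by auto
qed

lemma pt_QX0: "pt QX0 0 (-1)"
proof -
  have k: "Poly_Mapping.keys QX0 \<subseteq> {(1,-1),(0,-1)}"
    unfolding QX0_eq using keys_add[of "sng (1,-1) (tp 1)" "sng (0,-1) 1"] by (auto simp: tp_nz)
  have l: "Poly_Mapping.lookup QX0 (0,-1) = tp 0"
    by (simp add: QX0_eq lookup_add lookup_single tp_0)
  show ?thesis unfolding pt_def using k l by auto
qed

lemma pt_E: "pt (E c d) c d"
  unfolding E_def
  apply (rule pt_cong)
    apply (rule pt_qmul[OF pt_scal pt_qmul[OF pt_pow[OF pt_QX3] pt_qmul[OF pt_pow[OF pt_QX1]
            pt_qmul[OF pt_pow[OF pt_QX2] pt_pow[OF pt_QX0]]]]])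
   apply (simp_all add: posp_def)
  done

lemma lincomb_lookup:
  assumes "finite S" "{cd. f cd \<noteq> 0} \<subseteq> S"
  shows "Poly_Mapping.lookup (lincomb f) x = (\<Sum>cd\<in>S. f cd * Poly_Mapping.lookup (E (fst cd) (snd cd)) x)"
  unfolding lincomb_def lookup_sum lookup_scal
  by (rule sum.mono_neutral_left) (use assms in \<open>auto intro: finite_subset\<close>)

lemma indep:
  assumes S: "finite S" and Z: "\<And>x. (\<Sum>cd\<in>S. h cd * Poly_Mapping.lookup (E (fst cd) (snd cd)) x) = 0"
  shows "\<forall>cd\<in>S. h cd = 0"
proof (rule ccontr)
  assume "\<not> (\<forall>cd\<in>S. h cd = 0)"
  then have ne: "{cd\<in>S. h cd \<noteq> 0} \<noteq> {}" by auto
  let ?Z = "{cd\<in>S. h cd \<noteq> 0}"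
  let ?m = "Min ((\<lambda>cd. fst cd + snd cd) ` ?Z)"
  have fz: "finite ?Z" using S by simp
  have "?m \<in> (\<lambda>cd. fst cd + snd cd) ` ?Z" using fz ne by (intro Min_in) auto
  then obtain c0 where c0: "c0 \<in> ?Z" "fst c0 + snd c0 = ?m" by auto
  have mle: "\<And>cd. cd \<in> ?Z \<Longrightarrow> fst c0 + snd c0 \<le> fst cd + snd cd"
    using fz c0(2) by (metis (no_types, lifting) Min_le finite_imageI image_eqI)
  obtain u where u: "Poly_Mapping.lookup (E (fst c0) (snd c0)) c0 = tp u"
    using pt_E[of "fst c0" "snd c0"] by (auto simp: pt_def)
  have rest: "(\<Sum>cd\<in>S - {c0}. h cd * Poly_Mapping.lookup (E (fst cd) (snd cd)) c0) = 0"
  proof (rule sum.neutral, rule ballI)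
    fix cd assume cd: "cd \<in> S - {c0}"
    show "h cd * Poly_Mapping.lookup (E (fst cd) (snd cd)) c0 = 0"
    proof (rule ccontr)
      assume nz: "h cd * Poly_Mapping.lookup (E (fst cd) (snd cd)) c0 \<noteq> 0"
      then have "cd \<in> ?Z" using cd by auto
      then have le: "fst c0 + snd c0 \<le> fst cd + snd cd" by (rule mle)
      have "c0 \<in> Poly_Mapping.keys (E (fst cd) (snd cd))" using nz by (auto simp: in_keys_iff)
      then have "fst cd \<le> fst c0 \<and> snd cd \<le> snd c0"
        using pt_E[of "fst cd" "snd cd"] by (auto simp: pt_def)
      with le have "cd = c0" by (simp add: prod_eq_iff)
      with cd show False by auto
    qed
  qed
  have "0 = (\<Sum>cd\<in>S. h cd * Poly_Mapping.lookup (E (fst cd) (snd cd)) c0)" using Z by simp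
  also have "\<dots> = h c0 * Poly_Mapping.lookup (E (fst c0) (snd c0)) c0
      + (\<Sum>cd\<in>S - {c0}. h cd * Poly_Mapping.lookup (E (fst cd) (snd cd)) c0)"
    by (rule sum.remove) (use c0(1) S in auto)
  also have "\<dots> = h c0 * tp u" using rest u by simp
  finally have "h c0 * tp u = 0" by simp
  then show False using c0(1) tp_nz[of u] by simp
qed


theorem lemma4p5:
  fixes a b :: int
  assumes "b > 0"
  shows "(\<exists>f. finite {cd. f cd \<noteq> 0} \<and>
            lincomb f = qmul (qmul (scal (tp (-a))) QX4) (E a b) - E a (b - 1))
       \<and> (\<forall>f. finite {cd. f cd \<noteq> 0} \<and>
            lincomb f = qmul (qmul (scal (tp (-a))) QX4) (E a b) - E a (b - 1)
          \<longrightarrow> (\<forall>c d. f (c, d) \<noteq> 0 \<longrightarrow> c = a - 1 \<and> d \<ge> b - 1 \<and> b - 1 \<ge> 0))"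
proof -
  let ?T = "qmul (qmul (scal (tp (-a))) QX4) (E a b) - E a (b - 1)"
  define G where "G = (\<lambda>cd. if cd = (a-1,b-1) then tp (-b) else if 1 \<le> a \<and> cd = (a-1,b+3) then tp (-4*a-b) else (0::lring))"
  have supp: "{cd. G cd \<noteq> 0} = (if 1 \<le> a then {(a-1,b-1),(a-1,b+3)} else {(a-1,b-1)})"
    by (auto simp: G_def tp_nz)
  have finG: "finite {cd. G cd \<noteq> 0}" unfolding supp by simp
  have linG: "lincomb G = ?T"
  proof (cases "1 \<le> a")
    case True
    have "lincomb G = qmul (scal (G (a-1,b-1))) (E (a-1) (b-1)) + qmul (scal (G (a-1,b+3))) (E (a-1) (b+3))"
      unfolding lincomb_def supp using True by simp
    also have "\<dots> = ?T" using exist_pos[OF True assms] True by (simp add: G_def)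
    finally show ?thesis .
  next
    case False
    have "lincomb G = qmul (scal (G (a-1,b-1))) (E (a-1) (b-1))"
      unfolding lincomb_def supp using False by simp
    also have "\<dots> = ?T" using exist_neg[of a b] False assms by (simp add: G_def)
    finally show ?thesis .
  qed
  have uniq: "f (c,d) \<noteq> 0 \<Longrightarrow> c = a - 1 \<and> d \<ge> b - 1 \<and> b - 1 \<ge> 0"
    if ff: "finite {cd. f cd \<noteq> 0}" and lf: "lincomb f = ?T" for f c d
  proof -
    let ?S = "{cd. f cd \<noteq> 0} \<union> {cd. G cd \<noteq> 0}"
    have fS: "finite ?S" using ff finG by simp
    have "\<forall>cd\<in>?S. (f cd - G cd) = 0"
    proof (rule indep[OF fS])
      fix x
      have "Poly_Mapping.lookup (lincomb f) x = Poly_Mapping.lookup (lincomb G) x" using lf linG by simp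
      then have "(\<Sum>cd\<in>?S. f cd * Poly_Mapping.lookup (E (fst cd) (snd cd)) x)
          = (\<Sum>cd\<in>?S. G cd * Poly_Mapping.lookup (E (fst cd) (snd cd)) x)"
        using lincomb_lookup[OF fS, of f x] lincomb_lookup[OF fS, of G x] by auto
      then show "(\<Sum>cd\<in>?S. (f cd - G cd) * Poly_Mapping.lookup (E (fst cd) (snd cd)) x) = 0"
        by (simp add: left_diff_distrib sum_subtractf)
    qed
    moreover assume nz: "f (c,d) \<noteq> 0"
    ultimately have "f (c,d) - G (c,d) = 0" by blast
    with nz have "(c,d) \<in> {cd. G cd \<noteq> 0}" by simp
    then have "(c,d) = (a-1,b-1) \<or> (c,d) = (a-1,b+3)" unfolding supp by (simp split: if_splits)
    then show ?thesis using assms by auto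
  qed
  show ?thesis
  proof (rule conjI)
    show "\<exists>f. finite {cd. f cd \<noteq> 0} \<and> lincomb f = ?T" using finG linG by blast
  next
    show "\<forall>f. finite {cd. f cd \<noteq> 0} \<and> lincomb f = ?T
          \<longrightarrow> (\<forall>c d. f (c, d) \<noteq> 0 \<longrightarrow> c = a - 1 \<and> d \<ge> b - 1 \<and> b - 1 \<ge> 0)"
    proof (intro allI impI)
    fix f c d assume "finite {cd. f cd \<noteq> 0} \<and> lincomb f = ?T" and "f (c,d) \<noteq> 0"
    then show "c = a - 1 \<and> d \<ge> b - 1 \<and> b - 1 \<ge> 0" using uniq by blast
  qed
  qed
qed

end
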